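(* Let $\mathcal{M}$ be a separable metric space, $f:\mathcal{M}\to\mathcal{M}$ a continuous bijection with continuous inverse, $\mathcal{X}\subseteq\mathcal{M}$ forward invariant under $f$, $\mathcal{Z}$ a separable metric space, $g:\mathcal{Z}\to\mathcal{Z}$ a continuous bijection with continuous inverse, and $F:\mathcal{X}\to\mathcal{Z}$ continuous with $F\circ f=g\circ F$ on $\mathcal{X}$. For $\xi\in\mathcal{X}$, if $\alpha_{\mathcal{X}}(\xi)$ is nonempty, then $F(\alpha_{\mathcal{X}}(\xi))\subseteq\alpha_{\mathcal{Z}}(F(\xi))$. Furthermore, if the trajectory through $\xi$ is backward precompact in $\mathcal{X}$, then $F(\alpha_{\mathcal{X}}(\xi))=\alpha_{\mathcal{Z}}(F(\xi))$.
   Context: $\alpha_{\mathcal{X}}(\xi)$ is the set of $x\in\mathcal{X}$ such that $f^{-k_j}(\xi)\to x$ for some indices $k_j\to\infty$, where $f^{-k}$ is the $k$-th iterate of $f^{-1}$; $\alpha_{\mathcal{Z}}(\zeta)$ is the set of $z\in\mathcal{Z}$ with $g^{-k_j}(\zeta)\to z$ for some $k_j\to\infty$. The trajectory through $\xi$ is backward precompact in $\mathcal{X}$ if the closure in $\mathcal{X}$ of $\{f^{-k}(\xi)\mid k\in\mathbb{N}\}$ is compact.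
   Formalization: Both parts hold only for xi whose backward iterates $f^{-k}(\xi)$, for every k in N, all lie in $\mathcal{X}$, not for every $\xi\in\mathcal{X}$. The paper assumes this as well. *)

theory Defs
  imports "HOL-Analysis.Analysis"
begin

text \<open>Here h plays the role of the inverse map, so (h ^^ k) p is the k-th backward iterate.\<close>
definition alpha_limit_set :: "'a::topological_space set \<Rightarrow> ('a \<Rightarrow> 'a) \<Rightarrow> 'a \<Rightarrow> 'a set" where
  "alpha_limit_set S h p =
     {x \<in> S. \<exists>k::nat \<Rightarrow> nat. filterlim k at_top sequentially \<and>
                          ((\<lambda>j. (h ^^ k j) p) \<longlongrightarrow> x) sequentially}"

end

theory Submission
  imports Defs
begin

theorem corollary25:
  fixes f :: "'a::metric_space \<Rightarrow> 'a" and g :: "'b::metric_space \<Rightarrow> 'b"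
    and F :: "'a \<Rightarrow> 'b" and X :: "'a set" and \<xi> :: 'a
  assumes sepM: "separable_space (euclidean :: 'a topology)"
    and f_bij: "bij f" and f_cont: "continuous_on UNIV f" and finv_cont: "continuous_on UNIV (inv f)"
    and X_inv: "f ` X \<subseteq> X"
    and sepZ: "separable_space (euclidean :: 'b topology)"
    and g_bij: "bij g" and g_cont: "continuous_on UNIV g" and ginv_cont: "continuous_on UNIV (inv g)"
    and F_cont: "continuous_on X F"
    and F_conj: "\<And>x. x \<in> X \<Longrightarrow> F (f x) = g (F x)"
    and \<xi>X: "\<xi> \<in> X"
    and back_orbit_X: "\<And>k. ((inv f) ^^ k) \<xi> \<in> X"
  shows "(alpha_limit_set X (inv f) \<xi> \<noteq> {} \<longrightarrow>
            F ` alpha_limit_set X (inv f) \<xi> \<subseteq> alpha_limit_set UNIV (inv g) (F \<xi>))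
       \<and> (compact (X \<inter> closure (range (\<lambda>k. ((inv f) ^^ k) \<xi>))) \<longrightarrow>
            F ` alpha_limit_set X (inv f) \<xi> = alpha_limit_set UNIV (inv g) (F \<xi>))"
proof -
  have orb: "F (((inv f) ^^ k) \<xi>) = ((inv g) ^^ k) (F \<xi>)" for k
  proof (induction k)
    case 0 then show ?case by simp
  next
    case (Suc k)
    define y where "y = ((inv f) ^^ Suc k) \<xi>"
    have yX: "y \<in> X" using back_orbit_X y_def by blast
    have fy: "f y = ((inv f) ^^ k) \<xi>" unfolding y_def
      by (simp add: bij_is_surj f_bij surj_f_inv_f)
    have "g (F y) = ((inv g) ^^ k) (F \<xi>)" using F_conj[OF yX] fy Suc by simp
    hence "inv g (g (F y)) = inv g (((inv g) ^^ k) (F \<xi>))" by simp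
    hence "F y = inv g (((inv g) ^^ k) (F \<xi>))"
      by (simp add: inv_f_f[OF bij_is_inj[OF g_bij]])
    then show ?case unfolding y_def by simp
  qed
  have sub: "F ` alpha_limit_set X (inv f) \<xi> \<subseteq> alpha_limit_set UNIV (inv g) (F \<xi>)"
  proof
    fix z assume "z \<in> F ` alpha_limit_set X (inv f) \<xi>"
    then obtain x k where xX: "x \<in> X" and z: "z = F x" and k: "filterlim k at_top sequentially"
      and lim: "((\<lambda>j. ((inv f) ^^ k j) \<xi>) \<longlongrightarrow> x) sequentially"
      unfolding alpha_limit_set_def by blast
    have "((\<lambda>j. F (((inv f) ^^ k j) \<xi>)) \<longlongrightarrow> F x) sequentially"
      by (rule continuous_on_tendsto_compose[OF F_cont lim xX]) (simp add: back_orbit_X)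
    then show "z \<in> alpha_limit_set UNIV (inv g) (F \<xi>)"
      unfolding alpha_limit_set_def z orb using k by blast
  qed
  moreover have "F ` alpha_limit_set X (inv f) \<xi> = alpha_limit_set UNIV (inv g) (F \<xi>)"
    if cpt: "compact (X \<inter> closure (range (\<lambda>k. ((inv f) ^^ k) \<xi>)))"
  proof
    show "alpha_limit_set UNIV (inv g) (F \<xi>) \<subseteq> F ` alpha_limit_set X (inv f) \<xi>"
    proof
      fix z assume "z \<in> alpha_limit_set UNIV (inv g) (F \<xi>)"
      then obtain k where k: "filterlim k at_top sequentially"
        and lim: "((\<lambda>j. ((inv g) ^^ k j) (F \<xi>)) \<longlongrightarrow> z) sequentially"
        unfolding alpha_limit_set_def by blast
      have "seq_compact (X \<inter> closure (range (\<lambda>k. ((inv f) ^^ k) \<xi>)))"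
        using cpt compact_imp_seq_compact by blast
      moreover have "\<forall>n. ((inv f) ^^ k n) \<xi> \<in> X \<inter> closure (range (\<lambda>k. ((inv f) ^^ k) \<xi>))"
      proof
        fix n
        have "((inv f) ^^ k n) \<xi> \<in> range (\<lambda>k. ((inv f) ^^ k) \<xi>)" by (rule rangeI)
        then show "((inv f) ^^ k n) \<xi> \<in> X \<inter> closure (range (\<lambda>k. ((inv f) ^^ k) \<xi>))"
          by (rule IntI[OF back_orbit_X subsetD[OF closure_subset]])
      qed
      ultimately obtain x r where xK: "x \<in> X \<inter> closure (range (\<lambda>k. ((inv f) ^^ k) \<xi>))"
        and r: "strict_mono r" and lr: "((\<lambda>n. ((inv f) ^^ k n) \<xi>) \<circ> r) \<longlonglongrightarrow> x"
        by (rule seq_compactE[where f="\<lambda>n. ((inv f) ^^ k n) \<xi>"])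
      have xX: "x \<in> X" using xK by blast
      have kr: "filterlim (k \<circ> r) at_top sequentially"
        using filterlim_compose[OF k filterlim_subseq[OF r]] by (simp add: comp_def)
      have lr': "((\<lambda>j. ((inv f) ^^ (k \<circ> r) j) \<xi>) \<longlongrightarrow> x) sequentially"
        using lr by (simp add: comp_def)
      have "((\<lambda>j. F (((inv f) ^^ (k \<circ> r) j) \<xi>)) \<longlongrightarrow> F x) sequentially"
        by (rule continuous_on_tendsto_compose[OF F_cont lr' xX]) (simp add: back_orbit_X)
      hence a: "((\<lambda>j. ((inv g) ^^ k (r j)) (F \<xi>)) \<longlongrightarrow> F x) sequentially"
        by (simp add: orb)
      have b: "((\<lambda>j. ((inv g) ^^ k (r j)) (F \<xi>)) \<longlongrightarrow> z) sequentially"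
        using LIMSEQ_subseq_LIMSEQ[OF lim r] by (simp add: comp_def)
      have "z = F x" using LIMSEQ_unique[OF b a] .
      moreover have "x \<in> alpha_limit_set X (inv f) \<xi>"
        unfolding alpha_limit_set_def using xX kr lr' by blast
      ultimately show "z \<in> F ` alpha_limit_set X (inv f) \<xi>" by blast
    qed
  qed (rule sub)
  ultimately show ?thesis by blast
qed

end
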